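(* Assume in addition that $\lambda_A>0$ and that the dataset is balanced, i.e. $s_{N+1}=s_1$. Let $\alpha=1/8$ and let $M$ be a positive integer with $M\ge 16/\lambda_A$ (the paper takes $M=16/\lambda_A$). Then the iterates of TD-SVRG (Algorithm 1) satisfy, for every $m\ge0$, $$\mathbb E[f_d(\tilde\theta_m)]\le\left(\tfrac23\right)^m f_d(\tilde\theta_0).$$
   Context: Finite-sample setting. Let $\mathcal S$ be a finite state space, $\phi:\mathcal S\to\mathbb R^d$ a feature map with $\|\phi(s)\|_2\le 1$ for all $s$, $r:\mathcal S\times\mathcal S\to\mathbb R$ a reward function and $\gamma\in[0,1)$. For a pair of states $(s,s')$ and $\theta\in\mathbb R^d$ let $g_{s,s'}(\theta)=(r(s,s')+\gamma\phi(s')^T\theta-\phi(s)^T\theta)\phi(s)$. A dataset is a state trajectory $s_1,\dots,s_{N+1}$, giving the $N$ pairs $(s_t,s_{t+1})$, $t=1,\dots,N$. Let $A_d=\frac1N\sum_{t=1}^N\phi(s_t)(\phi(s_t)-\gamma\phi(s_{t+1}))^T$ and $b_d=\frac1N\sum_{t=1}^N r(s_t,s_{t+1})\phi(s_t)$, so that $\bar g(\theta):=\frac1N\sum_{t=1}^N g_{s_t,s_{t+1}}(\theta)=-A_d\theta+b_d$. Assume $A_d$ is nonsingular and let $\theta^*=A_d^{-1}b_d$. Let $\lambda_A$ denote the minimum eigenvalue of $(A_d+A_d^T)/2$. Define $f_d(\theta)=(\theta-\theta^* )^TA_d(\theta-\theta^* )$. Algorithm 1 (TD-SVRG): given $\alpha>0$,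 an integer $M\ge1$ and an initial $\tilde\theta_0\in\mathbb R^d$, for epochs $m=1,2,\dots$: set $\tilde\theta=\tilde\theta_{m-1}$, compute $\bar g(\tilde\theta)$, set $\theta_0=\tilde\theta$; for $t=1,\dots,M$ draw an index $i_t$ uniformly from $\{1,\dots,N\}$, independently of everything else, put $(s,s')=(s_{i_t},s_{i_t+1})$, $v_t=g_{s,s'}(\theta_{t-1})-g_{s,s'}(\tilde\theta)+\bar g(\tilde\theta)$ and $\theta_t=\theta_{t-1}+\alpha v_t$; finally set $\tilde\theta_m=\theta_{t'}$ where $t'$ is drawn uniformly from $\{0,\dots,M-1\}$ independently of everything else. *)

theory Defs
  imports "HOL-Analysis.Analysis" "HOL-Probability.Probability"
begin

text \<open>TD-SVRG setting. States have type 's, features live in real^'d.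
  The trajectory is s :: nat => 's, used at indices 1..N+1; the pairs are (s t, s (t+1)), t = 1..N.\<close>

definition outer_prod :: "real^'d \<Rightarrow> real^'d \<Rightarrow> real^'d^'d" where
  "outer_prod u v = (\<chi> i j. u $ i * v $ j)"

definition td_g :: "('s \<Rightarrow> real^'d) \<Rightarrow> ('s \<Rightarrow> 's \<Rightarrow> real) \<Rightarrow> real \<Rightarrow> 's \<Rightarrow> 's \<Rightarrow> real^'d \<Rightarrow> real^'d" where
  "td_g \<phi> r \<gamma> x x' \<theta> = (r x x' + \<gamma> * (\<phi> x' \<bullet> \<theta>) - \<phi> x \<bullet> \<theta>) *\<^sub>R \<phi> x"

definition A_d :: "('s \<Rightarrow> real^'d) \<Rightarrow> real \<Rightarrow> (nat \<Rightarrow> 's) \<Rightarrow> nat \<Rightarrow> real^'d^'d" where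
  "A_d \<phi> \<gamma> s N = (1 / real N) *\<^sub>R (\<Sum>t=1..N. outer_prod (\<phi> (s t)) (\<phi> (s t) - \<gamma> *\<^sub>R \<phi> (s (t+1))))"

definition b_d :: "('s \<Rightarrow> real^'d) \<Rightarrow> ('s \<Rightarrow> 's \<Rightarrow> real) \<Rightarrow> (nat \<Rightarrow> 's) \<Rightarrow> nat \<Rightarrow> real^'d" where
  "b_d \<phi> r s N = (1 / real N) *\<^sub>R (\<Sum>t=1..N. r (s t) (s (t+1)) *\<^sub>R \<phi> (s t))"

definition g_bar :: "('s \<Rightarrow> real^'d) \<Rightarrow> ('s \<Rightarrow> 's \<Rightarrow> real) \<Rightarrow> real \<Rightarrow> (nat \<Rightarrow> 's) \<Rightarrow> nat \<Rightarrow> real^'d \<Rightarrow> real^'d" where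
  "g_bar \<phi> r \<gamma> s N \<theta> = (1 / real N) *\<^sub>R (\<Sum>t=1..N. td_g \<phi> r \<gamma> (s t) (s (t+1)) \<theta>)"

definition theta_star :: "('s \<Rightarrow> real^'d) \<Rightarrow> ('s \<Rightarrow> 's \<Rightarrow> real) \<Rightarrow> real \<Rightarrow> (nat \<Rightarrow> 's) \<Rightarrow> nat \<Rightarrow> real^'d" where
  "theta_star \<phi> r \<gamma> s N = matrix_inv (A_d \<phi> \<gamma> s N) *v b_d \<phi> r s N"

definition lambda_A :: "real^'d^'d \<Rightarrow> real" where
  "lambda_A A = Min {l. \<exists>v. v \<noteq> 0 \<and> ((1/2) *\<^sub>R (A + transpose A)) *v v = l *\<^sub>R v}"

definition f_d :: "('s \<Rightarrow> real^'d) \<Rightarrow> ('s \<Rightarrow> 's \<Rightarrow> real) \<Rightarrow> real \<Rightarrow> (nat \<Rightarrow> 's) \<Rightarrow> nat \<Rightarrow> real^'d \<Rightarrow> real" where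
  "f_d \<phi> r \<gamma> s N \<theta> = (\<theta> - theta_star \<phi> r \<gamma> s N) \<bullet> (A_d \<phi> \<gamma> s N *v (\<theta> - theta_star \<phi> r \<gamma> s N))"

text \<open>One inner step of TD-SVRG with anchor \<open>tt\<close> (the current \<open>\<tilde>\<theta>\<close>): distribution of
  \<open>\<theta>_t\<close> given \<open>\<theta>_{t-1} = \<theta>\<close>, with \<open>i_t\<close> uniform on {1..N}.\<close>
definition svrg_step :: "('s \<Rightarrow> real^'d) \<Rightarrow> ('s \<Rightarrow> 's \<Rightarrow> real) \<Rightarrow> real \<Rightarrow> (nat \<Rightarrow> 's) \<Rightarrow> nat \<Rightarrow> real
    \<Rightarrow> real^'d \<Rightarrow> real^'d \<Rightarrow> (real^'d) pmf" where
  "svrg_step \<phi> r \<gamma> s N \<alpha> tt \<theta> =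
     map_pmf (\<lambda>i. \<theta> + \<alpha> *\<^sub>R (td_g \<phi> r \<gamma> (s i) (s (i+1)) \<theta> - td_g \<phi> r \<gamma> (s i) (s (i+1)) tt
                                 + g_bar \<phi> r \<gamma> s N tt))
       (pmf_of_set {1..N})"

fun inner_dist :: "('s \<Rightarrow> real^'d) \<Rightarrow> ('s \<Rightarrow> 's \<Rightarrow> real) \<Rightarrow> real \<Rightarrow> (nat \<Rightarrow> 's) \<Rightarrow> nat \<Rightarrow> real
    \<Rightarrow> real^'d \<Rightarrow> nat \<Rightarrow> (real^'d) pmf" where
  "inner_dist \<phi> r \<gamma> s N \<alpha> tt 0 = return_pmf tt"
| "inner_dist \<phi> r \<gamma> s N \<alpha> tt (Suc t) = bind_pmf (inner_dist \<phi> r \<gamma> s N \<alpha> tt t) (svrg_step \<phi> r \<gamma> s N \<alpha> tt)"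

text \<open>One epoch: output \<open>\<theta>_{t'}\<close> with \<open>t'\<close> uniform on {0..M-1}, independent of the inner iterates.\<close>
definition svrg_epoch :: "('s \<Rightarrow> real^'d) \<Rightarrow> ('s \<Rightarrow> 's \<Rightarrow> real) \<Rightarrow> real \<Rightarrow> (nat \<Rightarrow> 's) \<Rightarrow> nat \<Rightarrow> real
    \<Rightarrow> nat \<Rightarrow> real^'d \<Rightarrow> (real^'d) pmf" where
  "svrg_epoch \<phi> r \<gamma> s N \<alpha> M tt = bind_pmf (pmf_of_set {0..<M}) (inner_dist \<phi> r \<gamma> s N \<alpha> tt)"

fun td_svrg :: "('s \<Rightarrow> real^'d) \<Rightarrow> ('s \<Rightarrow> 's \<Rightarrow> real) \<Rightarrow> real \<Rightarrow> (nat \<Rightarrow> 's) \<Rightarrow> nat \<Rightarrow> real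
    \<Rightarrow> nat \<Rightarrow> real^'d \<Rightarrow> nat \<Rightarrow> (real^'d) pmf" where
  "td_svrg \<phi> r \<gamma> s N \<alpha> M th0 0 = return_pmf th0"
| "td_svrg \<phi> r \<gamma> s N \<alpha> M th0 (Suc m) = bind_pmf (td_svrg \<phi> r \<gamma> s N \<alpha> M th0 m) (svrg_epoch \<phi> r \<gamma> s N \<alpha> M)"

end

theory Submission
  imports Defs
begin


lemma outer_apply: "outer_prod u v *v y = (v \<bullet> y) *\<^sub>R u"
  by (simp add: outer_prod_def matrix_vector_mult_def inner_vec_def vec_eq_iff sum_distrib_left mult_ac)

lemma sum_mv: "(\<Sum>t\<in>T. (M t :: real^'n^'m)) *v y = (\<Sum>t\<in>T. M t *v y)"
  by (induct T rule: infinite_finite_induct) (auto simp: matrix_vector_mult_add_rdistrib)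

lemma A_apply: "A_d \<phi> \<gamma> s N *v y = (1 / real N) *\<^sub>R (\<Sum>t=1..N. ((\<phi> (s t) - \<gamma> *\<^sub>R \<phi> (s (t+1))) \<bullet> y) *\<^sub>R \<phi> (s t))"
  by (simp add: A_d_def scaleR_matrix_vector_assoc[symmetric] sum_mv outer_apply)

lemma td_g_eq: "td_g \<phi> r \<gamma> x x' \<theta> = r x x' *\<^sub>R \<phi> x - ((\<phi> x - \<gamma> *\<^sub>R \<phi> x') \<bullet> \<theta>) *\<^sub>R \<phi> x"
  by (simp add: td_g_def inner_diff_left algebra_simps)

lemma g_bar_eq: "g_bar \<phi> r \<gamma> s N \<theta> = b_d \<phi> r s N - A_d \<phi> \<gamma> s N *v \<theta>"
  by (simp add: g_bar_def b_d_def A_apply td_g_eq sum_subtractf scaleR_diff_right)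

lemma theta_star_eq: "invertible A \<Longrightarrow> A *v (matrix_inv A *v b) = (b :: real^'n)"
proof -
  assume "invertible A"
  then have "A ** matrix_inv A = mat 1"
    unfolding invertible_def matrix_inv_def by (rule someI2_ex) auto
  then show ?thesis by (simp add: matrix_vector_mul_assoc)
qed



lemma shift_sum:
  fixes a :: "nat \<Rightarrow> real"
  assumes "N \<ge> 1" "a (N+1) = a 1"
  shows "(\<Sum>t=1..N. a (t+1)) = (\<Sum>t=1..N. a t)"
proof -
  have "(\<Sum>t=1..N. a (t+1)) = (\<Sum>t=Suc 1..Suc N. a t)"
    by (subst sum.shift_bounds_cl_Suc_ivl) simp
  also have "\<dots> = (\<Sum>t=1..Suc N. a t) - a 1"
    using assms by (simp add: sum.atLeast_Suc_atMost)
  also have "\<dots> = (\<Sum>t=1..N. a t)"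
    using assms by simp
  finally show ?thesis .
qed

lemma quad_bound:
  fixes a :: "nat \<Rightarrow> real"
  assumes "N \<ge> 1" "a (N+1) = a 1" "0 \<le> \<gamma>" "\<gamma> < 1"
  shows "(\<Sum>t=1..N. (a t - \<gamma> * a (t+1))^2) \<le> 2 * (\<Sum>t=1..N. (a t - \<gamma> * a (t+1)) * a t)"
proof -
  have sh: "(\<Sum>t=1..N. (a (t+1))^2) = (\<Sum>t=1..N. (a t)^2)"
    using shift_sum[of N "\<lambda>t. (a t)^2"] assms by simp
  have e1: "(\<Sum>t=1..N. (a t - \<gamma> * a (t+1))^2) = (\<Sum>t=1..N. (a t)^2) - 2*\<gamma>*(\<Sum>t=1..N. a t * a (t+1)) + \<gamma>^2 * (\<Sum>t=1..N. (a (t+1))^2)"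
    by (simp add: power2_eq_square algebra_simps sum.distrib sum_subtractf sum_distrib_left)
  have e2: "(\<Sum>t=1..N. (a t - \<gamma> * a (t+1)) * a t) = (\<Sum>t=1..N. (a t)^2) - \<gamma>*(\<Sum>t=1..N. a t * a (t+1))"
    by (simp add: power2_eq_square algebra_simps sum.distrib sum_subtractf sum_distrib_left)
  have "0 \<le> (\<Sum>t=1..N. (a t)^2)" by (intro sum_nonneg) simp
  moreover have "\<gamma>^2 \<le> 1" using assms by (simp add: power_le_one)
  ultimately have "\<gamma>^2 * (\<Sum>t=1..N. (a t)^2) \<le> (\<Sum>t=1..N. (a t)^2)"
    by (simp add: mult_left_le_one_le)
  then show ?thesis unfolding e1 e2 sh by (simp add: right_diff_distrib)
qed



lemma norm_diff_sq_le: "(norm (w - u :: 'a::real_inner))^2 \<le> 2 * (norm w)^2 + 2 * (norm u)^2"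
proof -
  have "(norm (w - u))^2 + (norm (w + u))^2 = 2 * (norm w)^2 + 2 * (norm u)^2"
    by (simp add: power2_norm_eq_inner inner_add_left inner_add_right inner_diff_left inner_diff_right inner_commute)
  moreover have "0 \<le> (norm (w + u))^2" by simp
  ultimately show ?thesis by linarith
qed

lemma core_step:
  fixes P C :: "nat \<Rightarrow> 'a::real_inner" and Aop :: "'a \<Rightarrow> 'a" and x z :: 'a
  assumes N: "N \<ge> 1" and P: "\<And>t. norm (P t) \<le> 1"
   and Aop: "\<And>y. Aop y = (1/real N) *\<^sub>R (\<Sum>t=1..N. (C t \<bullet> y) *\<^sub>R P t)"
   and Q: "\<And>y. (\<Sum>t=1..N. (C t \<bullet> y)^2) \<le> 2 * real N * (y \<bullet> Aop y)"
  shows "(\<Sum>t=1..N. (norm (x + (1/8) *\<^sub>R (- ((C t \<bullet> (x - z)) *\<^sub>R P t) - Aop z)))^2)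
     \<le> real N * (norm x)^2 - 3/16 * (real N * (x \<bullet> Aop x)) + 1/16 * (real N * (z \<bullet> Aop z))"
proof -
  define u where "u t = (C t \<bullet> x) *\<^sub>R P t" for t
  define w where "w t = (C t \<bullet> z) *\<^sub>R P t - Aop z" for t
  have Npos: "real N > 0" using N by simp
  have key: "(\<Sum>t=1..N. (C t \<bullet> y) * (v \<bullet> P t)) = real N * (v \<bullet> Aop y)" for v y
    using Npos by (simp add: Aop inner_sum_right)
  have key2: "(\<Sum>t=1..N. (C t \<bullet> y) *\<^sub>R P t) = real N *\<^sub>R Aop y" for y
    using Npos by (simp add: Aop)
  have vw: "- ((C t \<bullet> (x - z)) *\<^sub>R P t) - Aop z = w t - u t" for t
    by (simp add: u_def w_def inner_diff_right scaleR_diff_left algebra_simps)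
  have pt: "(norm (x + (1/8) *\<^sub>R (w t - u t)))^2 \<le> (norm x)^2 + (1/4) * (x \<bullet> w t - x \<bullet> u t)
      + (1/32) * ((norm (u t))^2 + (norm (w t))^2)" for t
  proof -
    have "(norm (x + (1/8) *\<^sub>R (w t - u t)))^2 = (norm x)^2 + (1/4) * (x \<bullet> w t - x \<bullet> u t) + (1/64) * (norm (w t - u t))^2"
      by (simp add: power2_norm_eq_inner inner_add_left inner_add_right inner_diff_right inner_commute)
    then show ?thesis using norm_diff_sq_le[of "w t" "u t"] by (simp add: distrib_left right_diff_distrib)
  qed
  have S1: "(\<Sum>t=1..N. x \<bullet> u t) = real N * (x \<bullet> Aop x)"
    using key[of x x] by (simp add: u_def)
  have S2: "(\<Sum>t=1..N. x \<bullet> w t) = 0"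
    using key[of z x] by (simp add: w_def inner_diff_right sum_subtractf)
  have S3: "(\<Sum>t=1..N. (norm (u t))^2) \<le> 2 * (real N * (x \<bullet> Aop x))"
  proof -
    have "(\<Sum>t=1..N. (norm (u t))^2) \<le> (\<Sum>t=1..N. (C t \<bullet> x)^2)"
    proof (intro sum_mono)
      fix t
      have pn: "(norm (P t))^2 \<le> 1" using P[of t] by (simp add: power_le_one)
      have "(C t \<bullet> x)^2 * (norm (P t))^2 \<le> (C t \<bullet> x)^2"
        using mult_left_mono[OF pn, of "(C t \<bullet> x)^2"] by simp
      then show "(norm (u t))^2 \<le> (C t \<bullet> x)^2" by (simp add: u_def power_mult_distrib)
    qed
    then show ?thesis using Q[of x] by linarith
  qed
  have S4: "(\<Sum>t=1..N. (norm (w t))^2) \<le> 2 * (real N * (z \<bullet> Aop z))"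
  proof -
    have e: "(norm (w t))^2 = (C t \<bullet> z)^2 * (norm (P t))^2 - 2 * ((C t \<bullet> z) * (Aop z \<bullet> P t)) + (norm (Aop z))^2" for t
      by (simp add: w_def power2_norm_eq_inner inner_diff_left inner_diff_right inner_commute) (simp add: power2_eq_square algebra_simps)
    have "(\<Sum>t=1..N. (norm (w t))^2) = (\<Sum>t=1..N. (C t \<bullet> z)^2 * (norm (P t))^2) - 2 * (real N * (Aop z \<bullet> Aop z)) + real N * (norm (Aop z))^2"
      unfolding e using key[of z "Aop z"] by (simp add: sum.distrib sum_subtractf sum_distrib_left[symmetric])
    also have "\<dots> = (\<Sum>t=1..N. (C t \<bullet> z)^2 * (norm (P t))^2) - real N * (norm (Aop z))^2"
      by (simp add: power2_norm_eq_inner)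
    also have "\<dots> \<le> (\<Sum>t=1..N. (C t \<bullet> z)^2 * (norm (P t))^2)"
      using Npos by simp
    also have "\<dots> \<le> (\<Sum>t=1..N. (C t \<bullet> z)^2)"
    proof (intro sum_mono)
      fix t
      have pn: "(norm (P t))^2 \<le> 1" using P[of t] by (simp add: power_le_one)
      have "(C t \<bullet> z)^2 * (norm (P t))^2 \<le> (C t \<bullet> z)^2"
        using mult_left_mono[OF pn, of "(C t \<bullet> z)^2"] by simp
      then show "(C t \<bullet> z)^2 * (norm (P t))^2 \<le> (C t \<bullet> z)^2" by simp
    qed
    also have "\<dots> \<le> 2 * (real N * (z \<bullet> Aop z))" using Q[of z] by simp
    finally show ?thesis .
  qed
  have "(\<Sum>t=1..N. (norm (x + (1/8) *\<^sub>R (- ((C t \<bullet> (x - z)) *\<^sub>R P t) - Aop z)))^2)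
      \<le> (\<Sum>t=1..N. (norm x)^2 + (1/4) * (x \<bullet> w t - x \<bullet> u t) + (1/32) * ((norm (u t))^2 + (norm (w t))^2))"
    unfolding vw by (intro sum_mono pt)
  also have "\<dots> = real N * (norm x)^2 + (1/4) * ((\<Sum>t=1..N. x \<bullet> w t) - (\<Sum>t=1..N. x \<bullet> u t))
      + (1/32) * ((\<Sum>t=1..N. (norm (u t))^2) + (\<Sum>t=1..N. (norm (w t))^2))"
    by (simp add: sum.distrib sum_subtractf sum_distrib_left sum_divide_distrib[symmetric])
  also have "\<dots> \<le> real N * (norm x)^2 - 3/16 * (real N * (x \<bullet> Aop x)) + 1/16 * (real N * (z \<bullet> Aop z))"
    unfolding S1 S2 using S3 S4 by (simp only: distrib_left right_diff_distrib)
  finally show ?thesis .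
qed



lemma real_quad_zero:
  fixes k Q :: real
  assumes Q: "0 \<le> Q" and H: "\<And>t. 0 \<le> 2*t*k + t^2*Q"
  shows "k = 0"
proof -
  define t where "t = - k / (Q + 1)"
  have Qp: "Q + 1 > 0" using Q by simp
  have tq: "t * (Q + 1) = - k" using Qp by (simp add: t_def)
  have "0 \<le> (Q+1)^2 * (2*t*k + t^2*Q)" using H[of t] by simp
  also have "(Q+1)^2 * (2*t*k + t^2*Q) = 2*k*(Q+1)*(t*(Q+1)) + (t*(Q+1))^2*Q"
    by (simp add: power2_eq_square algebra_simps)
  also have "\<dots> = - (k^2 * (Q + 2))" unfolding tq by (simp add: power2_eq_square algebra_simps)
  finally have "k^2 * (Q + 2) \<le> 0" by simp
  moreover have "0 \<le> k^2 * (Q+2)" using Q by simp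
  ultimately have "k^2 * (Q+2) = 0" by linarith
  then show ?thesis using Q by simp
qed

lemma eig_bound:
  fixes A :: "real^'d^'d"
  shows "lambda_A A * (norm x)^2 \<le> x \<bullet> (A *v x)"
proof -
  define S where "S = (1/2) *\<^sub>R (A + transpose A)"
  have Sv: "S *v y = (1/2) *\<^sub>R (A *v y + y v* A)" for y
    by (simp add: S_def scaleR_matrix_vector_assoc[symmetric] matrix_vector_mult_add_rdistrib)
  have Sx: "y \<bullet> (S *v y) = y \<bullet> (A *v y)" for y
    by (simp add: Sv inner_add_right inner_commute[of y "y v* A"] dot_lmul_matrix)
  have Ssym: "y \<bullet> (S *v z) = z \<bullet> (S *v y)" for y z
    by (simp add: Sv inner_add_right inner_commute[of _ "_ v* A"] dot_lmul_matrix)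
  define E where "E = {l. \<exists>v. v \<noteq> 0 \<and> S *v v = l *\<^sub>R v}"
  have lam: "lambda_A A = Min E" by (simp add: lambda_A_def E_def S_def)
  define ev where "ev l = (SOME v. v \<noteq> 0 \<and> S *v v = l *\<^sub>R v)" for l
  have evp: "ev l \<noteq> 0 \<and> S *v ev l = l *\<^sub>R ev l" if "l \<in> E" for l
  proof -
    from that obtain v where "v \<noteq> 0 \<and> S *v v = l *\<^sub>R v" unfolding E_def by blast
    then show ?thesis unfolding ev_def by (rule someI)
  qed
  have inj: "inj_on ev E"
  proof (rule inj_onI)
    fix l1 l2 assume h: "l1 \<in> E" "l2 \<in> E" "ev l1 = ev l2"
    then have "l1 *\<^sub>R ev l1 = l2 *\<^sub>R ev l1" using evp[of l1] evp[of l2] by metis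
    then show "l1 = l2" using evp[OF h(1)] by (simp add: scaleR_cancel_right)
  qed
  have orth: "pairwise orthogonal (ev ` E)"
  proof (clarsimp simp: pairwise_def)
    fix l1 l2 assume h: "l1 \<in> E" "l2 \<in> E" "ev l1 \<noteq> ev l2"
    then have ne: "l1 \<noteq> l2" by auto
    have "l1 * (ev l1 \<bullet> ev l2) = ev l2 \<bullet> (S *v ev l1)" using evp[OF h(1)] by (simp add: inner_commute)
    also have "\<dots> = ev l1 \<bullet> (S *v ev l2)" by (rule Ssym)
    also have "\<dots> = l2 * (ev l1 \<bullet> ev l2)" using evp[OF h(2)] by simp
    finally have "(l1 - l2) * (ev l1 \<bullet> ev l2) = 0" by (simp add: algebra_simps)
    then show "orthogonal (ev l1) (ev l2)" using ne by (simp add: orthogonal_def)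
  qed
  have "0 \<notin> ev ` E" using evp by auto
  then have "independent (ev ` E)" using orth pairwise_orthogonal_independent by blast
  then have "finite (ev ` E)" using independent_bound by blast
  then have finE: "finite E" using inj finite_imageD by blast
  have "sphere (0::real^'d) 1 \<noteq> {}"
    using vector_choose_size[of 1] by auto
  moreover have "continuous_on (sphere 0 1) (\<lambda>y::real^'d. y \<bullet> (S *v y))"
    by (intro continuous_intros)
  ultimately obtain v where v: "v \<in> sphere 0 1" and vmin: "\<And>y. y \<in> sphere 0 1 \<Longrightarrow> v \<bullet> (S *v v) \<le> y \<bullet> (S *v y)"
    using continuous_attains_inf[OF compact_sphere] by blast
  define \<mu> where "\<mu> = v \<bullet> (S *v v)"
  have nv: "norm v = 1" using v by simp
  have qnn: "\<mu> * (norm y)^2 \<le> y \<bullet> (S *v y)" for y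
  proof (cases "y = 0")
    case True then show ?thesis by simp
  next
    case False
    then have np: "norm y > 0" by simp
    have "(1 / norm y) *\<^sub>R y \<in> sphere 0 1" using np by simp
    then have "\<mu> \<le> ((1 / norm y) *\<^sub>R y) \<bullet> (S *v ((1 / norm y) *\<^sub>R y))" using vmin \<mu>_def by blast
    also have "\<dots> = (y \<bullet> (S *v y)) / (norm y)^2"
      by (simp add: matrix_vector_mult_scaleR power2_eq_square)
    finally show ?thesis using np by (simp add: field_simps)
  qed
  define w where "w = S *v v - \<mu> *\<^sub>R v"
  define Q where "Q = w \<bullet> (S *v w) - \<mu> * (norm w)^2"
  have Qnn: "0 \<le> Q" using qnn[of w] by (simp add: Q_def)
  have "w \<bullet> w = 0"
  proof (rule real_quad_zero[OF Qnn])
    fix t :: real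
    have "0 \<le> (v + t *\<^sub>R w) \<bullet> (S *v (v + t *\<^sub>R w)) - \<mu> * (norm (v + t *\<^sub>R w))^2"
      using qnn[of "v + t *\<^sub>R w"] by simp
    also have "(v + t *\<^sub>R w) \<bullet> (S *v (v + t *\<^sub>R w)) = v \<bullet> (S *v v) + t * (v \<bullet> (S *v w)) + t * (w \<bullet> (S *v v)) + t^2 * (w \<bullet> (S *v w))"
      by (simp add: matrix_vector_right_distrib matrix_vector_mult_scaleR inner_add_left inner_add_right power2_eq_square algebra_simps)
    also have "(norm (v + t *\<^sub>R w))^2 = (norm v)^2 + 2 * t * (v \<bullet> w) + t^2 * (norm w)^2"
      by (simp add: power2_norm_eq_inner inner_add_left inner_add_right inner_commute) (simp add: power2_eq_square algebra_simps)
    finally have "0 \<le> v \<bullet> (S *v v) + t * (v \<bullet> (S *v w)) + t * (w \<bullet> (S *v v)) + t^2 * (w \<bullet> (S *v w))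
        - \<mu> * ((norm v)^2 + 2 * t * (v \<bullet> w) + t^2 * (norm w)^2)" .
    moreover have sy: "v \<bullet> (S *v w) = w \<bullet> (S *v v)" by (rule Ssym)
    moreover have ww: "w \<bullet> w = w \<bullet> (S *v v) - \<mu> * (v \<bullet> w)"
    proof -
      have "w \<bullet> w = w \<bullet> (S *v v - \<mu> *\<^sub>R v)" by (simp add: w_def)
      then show ?thesis by (simp add: inner_diff_right inner_commute)
    qed
    moreover have "2 * t * (w \<bullet> w) + t^2 * Q = v \<bullet> (S *v v) + t * (v \<bullet> (S *v w)) + t * (w \<bullet> (S *v v)) + t^2 * (w \<bullet> (S *v w))
        - \<mu> * ((norm v)^2 + 2 * t * (v \<bullet> w) + t^2 * (norm w)^2)"
      unfolding ww Q_def sy nv \<mu>_def[symmetric] by (simp add: algebra_simps)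
    ultimately show "0 \<le> 2 * t * (w \<bullet> w) + t^2 * Q" by linarith
  qed
  then have "S *v v = \<mu> *\<^sub>R v" by (simp add: w_def)
  moreover have "v \<noteq> 0" using nv by auto
  ultimately have "\<mu> \<in> E" unfolding E_def by blast
  then have "lambda_A A \<le> \<mu>" using finE lam by simp
  then have "lambda_A A * (norm x)^2 \<le> \<mu> * (norm x)^2" by (simp add: mult_right_mono)
  also have "\<dots> \<le> x \<bullet> (A *v x)" using qnn[of x] Sx[of x] by simp
  finally show ?thesis .
qed



lemma E_bind:
  fixes h :: "'b \<Rightarrow> real"
  assumes "finite (set_pmf p)" "\<And>x. x \<in> set_pmf p \<Longrightarrow> finite (set_pmf (f x))"
  shows "measure_pmf.expectation (p \<bind> f) h = measure_pmf.expectation p (\<lambda>x. measure_pmf.expectation (f x) h)"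
  using assms by (simp add: pmf_expectation_bind[of "set_pmf p"] integral_measure_pmf[of "set_pmf p"])

lemma fin_step: "N \<ge> 1 \<Longrightarrow> finite (set_pmf (svrg_step \<phi> r \<gamma> s N \<alpha> tt \<theta>))"
  by (simp add: svrg_step_def)

lemma fin_inner: "N \<ge> 1 \<Longrightarrow> finite (set_pmf (inner_dist \<phi> r \<gamma> s N \<alpha> tt t))"
  by (induct t) (auto simp: fin_step)

lemma fin_epoch: "N \<ge> 1 \<Longrightarrow> M \<ge> 1 \<Longrightarrow> finite (set_pmf (svrg_epoch \<phi> r \<gamma> s N \<alpha> M tt))"
  by (auto simp: svrg_epoch_def fin_inner)

lemma fin_td: "N \<ge> 1 \<Longrightarrow> M \<ge> 1 \<Longrightarrow> finite (set_pmf (td_svrg \<phi> r \<gamma> s N \<alpha> M th0 m))"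
  by (induct m) (auto simp: fin_epoch)

theorem corollary1:
  fixes \<phi> :: "'s::finite \<Rightarrow> real^'d"
    and r :: "'s \<Rightarrow> 's \<Rightarrow> real"
    and \<gamma> \<alpha> :: real
    and s :: "nat \<Rightarrow> 's"
    and N M :: nat
    and th0 :: "real^'d"
  assumes "\<And>x. norm (\<phi> x) \<le> 1"
    and "0 \<le> \<gamma>" and "\<gamma> < 1"
    and "N \<ge> 1"
    and "invertible (A_d \<phi> \<gamma> s N)"
    and "lambda_A (A_d \<phi> \<gamma> s N) > 0"
    and "s (N + 1) = s 1"
    and "\<alpha> = 1/8"
    and "M \<ge> 1"
    and "real M \<ge> 16 / lambda_A (A_d \<phi> \<gamma> s N)"
  shows "\<forall>m. measure_pmf.expectation (td_svrg \<phi> r \<gamma> s N \<alpha> M th0 m) (f_d \<phi> r \<gamma> s N)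
           \<le> (2/3) ^ m * f_d \<phi> r \<gamma> s N th0"
proof -
  note phi = assms(1) and g0 = assms(2) and g1 = assms(3) and N1 = assms(4) and inv = assms(5)
    and lpos = assms(6) and bal = assms(7) and al = assms(8) and M1 = assms(9) and Mbig = assms(10)
  define A where "A = A_d \<phi> \<gamma> s N"
  define ts where "ts = theta_star \<phi> r \<gamma> s N"
  define f where "f = f_d \<phi> r \<gamma> s N"
  define P where "P t = \<phi> (s t)" for t
  define C where "C t = \<phi> (s t) - \<gamma> *\<^sub>R \<phi> (s (t+1))" for t
  define lam where "lam = lambda_A A"
  have Npos: "real N > 0" using N1 by simp
  have fdef: "f \<theta> = (\<theta> - ts) \<bullet> (A *v (\<theta> - ts))" for \<theta>
    by (simp add: f_def f_d_def ts_def A_def)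
  have Aop: "A *v y = (1/real N) *\<^sub>R (\<Sum>t=1..N. (C t \<bullet> y) *\<^sub>R P t)" for y
    by (simp add: A_def A_apply C_def P_def)
  have Q: "(\<Sum>t=1..N. (C t \<bullet> y)^2) \<le> 2 * real N * (y \<bullet> (A *v y))" for y
  proof -
    define a where "a t = P t \<bullet> y" for t
    have Ca: "C t \<bullet> y = a t - \<gamma> * a (t+1)" for t
      by (simp add: C_def a_def P_def inner_diff_left)
    have "real N * (y \<bullet> (A *v y)) = (\<Sum>t=1..N. (a t - \<gamma> * a (t+1)) * a t)"
      using Npos by (simp add: Aop inner_sum_right Ca) (simp add: a_def inner_commute)
    moreover have "a (N+1) = a 1" unfolding a_def P_def bal by simp
    ultimately show ?thesis using quad_bound[of N a \<gamma>] N1 g0 g1 by (simp add: Ca)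
  qed
  have Apsd: "0 \<le> y \<bullet> (A *v y)" for y
  proof -
    have "0 \<le> (\<Sum>t=1..N. (C t \<bullet> y)^2)" by (intro sum_nonneg) simp
    then have "0 \<le> real N * (y \<bullet> (A *v y))" using Q[of y] by linarith
    then show ?thesis using Npos by (simp add: zero_le_mult_iff)
  qed
  have fnn: "0 \<le> f \<theta>" for \<theta> using Apsd fdef by simp
  have Ats: "A *v ts = b_d \<phi> r s N"
    using theta_star_eq[OF inv] by (simp add: A_def ts_def theta_star_def)
  have eig: "lam * (norm y)^2 \<le> y \<bullet> (A *v y)" for y
    unfolding lam_def by (rule eig_bound)
  have step: "measure_pmf.expectation (svrg_step \<phi> r \<gamma> s N \<alpha> tt \<theta>) (\<lambda>u. (norm (u - ts))^2)
      \<le> (norm (\<theta> - ts))^2 - 3/16 * f \<theta> + 1/16 * f tt" for tt \<theta>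
  proof -
    define x where "x = \<theta> - ts"
    define z where "z = tt - ts"
    have new: "\<theta> + \<alpha> *\<^sub>R (td_g \<phi> r \<gamma> (s i) (s (i+1)) \<theta> - td_g \<phi> r \<gamma> (s i) (s (i+1)) tt
                                 + g_bar \<phi> r \<gamma> s N tt) - ts
       = x + (1/8) *\<^sub>R (- ((C i \<bullet> (x - z)) *\<^sub>R P i) - A *v z)" for i
    proof -
      have "td_g \<phi> r \<gamma> (s i) (s (i+1)) \<theta> - td_g \<phi> r \<gamma> (s i) (s (i+1)) tt = - ((C i \<bullet> (x - z)) *\<^sub>R P i)"
        by (simp add: td_g_eq C_def P_def x_def z_def inner_diff_right algebra_simps)
      moreover have "g_bar \<phi> r \<gamma> s N tt = - (A *v z)"
        by (simp add: g_bar_eq A_def[symmetric] Ats[symmetric] z_def matrix_vector_mult_diff_distrib)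
      ultimately show ?thesis by (simp add: al x_def)
    qed
    have "measure_pmf.expectation (svrg_step \<phi> r \<gamma> s N \<alpha> tt \<theta>) (\<lambda>u. (norm (u - ts))^2)
        = (\<Sum>i=1..N. (norm (x + (1/8) *\<^sub>R (- ((C i \<bullet> (x - z)) *\<^sub>R P i) - A *v z)))^2) / real N"
      using N1 by (simp add: svrg_step_def integral_pmf_of_set new del: One_nat_def)
    also have "\<dots> \<le> (real N * (norm x)^2 - 3/16 * (real N * (x \<bullet> (A *v x))) + 1/16 * (real N * (z \<bullet> (A *v z)))) / real N"
      using core_step[where N=N and P=P and C=C and Aop="\<lambda>y. A *v y" and x=x and z=z, OF N1 _ Aop Q] phi P_def
      by (intro divide_right_mono) auto
    also have "\<dots> = (norm (\<theta> - ts))^2 - 3/16 * f \<theta> + 1/16 * f tt"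
      using Npos by (simp add: fdef x_def z_def field_simps)
    finally show ?thesis .
  qed
  have lin: "measure_pmf.expectation p (\<lambda>x. a x - c * b x + d) = measure_pmf.expectation p a - c * measure_pmf.expectation p b + d"
    if "finite (set_pmf p)" for p :: "(real^'d) pmf" and a b :: "real^'d \<Rightarrow> real" and c d :: real
    using that by (simp add: integrable_measure_pmf_finite)
  define g where "g u = (norm (u - ts))^2" for u
  have inner: "measure_pmf.expectation (inner_dist \<phi> r \<gamma> s N \<alpha> tt t) g
      \<le> (norm (tt - ts))^2 - 3/16 * (\<Sum>k<t. measure_pmf.expectation (inner_dist \<phi> r \<gamma> s N \<alpha> tt k) f) + real t / 16 * f tt" for tt t
  proof (induct t)
    case 0
    then show ?case by (simp add: g_def)
  next
    case (Suc t)
    let ?p = "inner_dist \<phi> r \<gamma> s N \<alpha> tt t"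
    have "measure_pmf.expectation (inner_dist \<phi> r \<gamma> s N \<alpha> tt (Suc t)) g
        = measure_pmf.expectation ?p (\<lambda>\<theta>. measure_pmf.expectation (svrg_step \<phi> r \<gamma> s N \<alpha> tt \<theta>) g)"
      by (simp, rule E_bind[OF fin_inner[OF N1] fin_step[OF N1]])
    also have "\<dots> \<le> measure_pmf.expectation ?p (\<lambda>\<theta>. g \<theta> - 3/16 * f \<theta> + 1/16 * f tt)"
      by (intro integral_mono integrable_measure_pmf_finite fin_inner[OF N1]) (use step in \<open>simp add: g_def[abs_def]\<close>)
    also have "\<dots> = measure_pmf.expectation ?p g - 3/16 * measure_pmf.expectation ?p f + 1/16 * f tt"
      by (rule lin[OF fin_inner[OF N1]])
    also have "\<dots> \<le> (norm (tt - ts))^2 - 3/16 * (\<Sum>k<Suc t. measure_pmf.expectation (inner_dist \<phi> r \<gamma> s N \<alpha> tt k) f) + real (Suc t) / 16 * f tt"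
      using Suc by (simp add: field_simps)
    finally show ?case .
  qed
  have lamM: "16 \<le> lam * real M"
    using Mbig lpos by (simp add: lam_def A_def pos_divide_le_eq mult.commute)
  have epoch: "measure_pmf.expectation (svrg_epoch \<phi> r \<gamma> s N \<alpha> M tt) f \<le> 2/3 * f tt" for tt
  proof -
    define S where "S = (\<Sum>k<M. measure_pmf.expectation (inner_dist \<phi> r \<gamma> s N \<alpha> tt k) f)"
    define Z where "Z = (norm (tt - ts))^2"
    have e: "measure_pmf.expectation (svrg_epoch \<phi> r \<gamma> s N \<alpha> M tt) f = S / real M"
      unfolding svrg_epoch_def S_def atLeast0LessThan
      using M1 by (subst pmf_expectation_bind_pmf_of_set) (auto simp: fin_inner[OF N1] sum_divide_distrib field_simps lessThan_empty_iff)
    have "0 \<le> measure_pmf.expectation (inner_dist \<phi> r \<gamma> s N \<alpha> tt M) g"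
      unfolding g_def[abs_def] by (rule Bochner_Integration.integral_nonneg) simp
    then have h1: "3/16 * S \<le> Z + real M / 16 * f tt" using inner[of tt M] by (simp add: S_def Z_def)
    have h2: "lam * Z \<le> f tt" using eig[of "tt - ts"] by (simp add: fdef Z_def)
    have Z0: "0 \<le> Z" by (simp add: Z_def)
    have "16 * Z \<le> (lam * real M) * Z" using lamM Z0 by (rule mult_right_mono)
    also have "\<dots> = real M * (lam * Z)" by simp
    also have "\<dots> \<le> real M * f tt" using h2 by (intro mult_left_mono) auto
    finally have h3: "16 * Z \<le> real M * f tt" .
    have "S \<le> 2/3 * (real M * f tt)" using h1 h3 by linarith
    then show ?thesis using M1 by (simp add: e pos_divide_le_eq field_simps)
  qed
  show ?thesis
  proof
    fix m
    show "measure_pmf.expectation (td_svrg \<phi> r \<gamma> s N \<alpha> M th0 m) (f_d \<phi> r \<gamma> s N)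
           \<le> (2/3) ^ m * f_d \<phi> r \<gamma> s N th0"
      unfolding f_def[symmetric]
    proof (induct m)
      case 0
      then show ?case by simp
    next
      case (Suc m)
      let ?p = "td_svrg \<phi> r \<gamma> s N \<alpha> M th0 m"
      have "measure_pmf.expectation (td_svrg \<phi> r \<gamma> s N \<alpha> M th0 (Suc m)) f
          = measure_pmf.expectation ?p (\<lambda>\<theta>. measure_pmf.expectation (svrg_epoch \<phi> r \<gamma> s N \<alpha> M \<theta>) f)"
        by (simp, rule E_bind[OF fin_td[OF N1 M1] fin_epoch[OF N1 M1]])
      also have "\<dots> \<le> measure_pmf.expectation ?p (\<lambda>\<theta>. 2/3 * f \<theta>)"
        by (intro integral_mono integrable_measure_pmf_finite fin_td[OF N1 M1] epoch)
      also have "\<dots> = 2/3 * measure_pmf.expectation ?p f" by simp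
      also have "\<dots> \<le> 2/3 * ((2/3)^m * f th0)" using Suc by simp
      finally show ?case by simp
    qed
  qed
qed

end
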